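(* Let $(E,\le,u)$ be an ordered effect space whose positive cone $E_+$ is pointed. Let $A$ be a finite set of positive subunital linear maps $E\to E$ that is closed under composition (i.e. $S,T\in A$ implies $S\circ T\in A$). Then for each $T\in A$ there exists an integer $n\ge 1$ such that \[ T^n(d(T))=0, \] and moreover this $n$ can be chosen with $n\le |A|$.
   Context: An ordered effect space is a triple $(E,\le,u)$ where $E$ is a real vector space, $\le$ is a preorder (reflexive and transitive) on $E$ compatible with the vector space structure ($x\le y$ implies $x+z\le y+z$ and $\lambda x\le\lambda y$ for all $z\in E$, $\lambda\ge 0$), and $u\in E_+$ is a distinguished element called the unit, where $E_+=\{x\in E: x\ge 0\}$ is the positive cone. The cone is pointed if $E_+\cap(-E_+)=\{0\}$. A linear map $T:E\to E$ is positive if $T(E_+)\subseteq E_+$, subunital if $T(u)\le u$, unital if $T(u)=u$. The defect of a subunital map $T$ is $d(T)=u-T(u)$ (so $d(T)\ge 0$). $T^n$ denotes the $n$-fold composite. *)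

theory Defs
  imports Main "HOL.Real_Vector_Spaces"
begin

definition ordered_effect_space :: "('a::real_vector \<Rightarrow> 'a \<Rightarrow> bool) \<Rightarrow> 'a \<Rightarrow> bool" where
  "ordered_effect_space le u \<longleftrightarrow>
     (\<forall>x. le x x) \<and>
     (\<forall>x y z. le x y \<longrightarrow> le y z \<longrightarrow> le x z) \<and>
     (\<forall>x y z. le x y \<longrightarrow> le (x + z) (y + z)) \<and>
     (\<forall>x y (c::real). le x y \<longrightarrow> c \<ge> 0 \<longrightarrow> le (c *\<^sub>R x) (c *\<^sub>R y)) \<and>
     le 0 u"

definition positive_cone :: "('a::real_vector \<Rightarrow> 'a \<Rightarrow> bool) \<Rightarrow> 'a set" where
  "positive_cone le = {x. le 0 x}"

definition pointed_cone :: "('a::real_vector \<Rightarrow> 'a \<Rightarrow> bool) \<Rightarrow> bool" where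
  "pointed_cone le \<longleftrightarrow> positive_cone le \<inter> uminus ` positive_cone le = {0}"

definition positive_map :: "('a::real_vector \<Rightarrow> 'a \<Rightarrow> bool) \<Rightarrow> ('a \<Rightarrow> 'a) \<Rightarrow> bool" where
  "positive_map le T \<longleftrightarrow> T ` positive_cone le \<subseteq> positive_cone le"

definition subunital :: "('a::real_vector \<Rightarrow> 'a \<Rightarrow> bool) \<Rightarrow> 'a \<Rightarrow> ('a \<Rightarrow> 'a) \<Rightarrow> bool" where
  "subunital le u T \<longleftrightarrow> le (T u) u"

definition defect :: "'a::real_vector \<Rightarrow> ('a \<Rightarrow> 'a) \<Rightarrow> 'a" where
  "defect u T = u - T u"

end

theory Submission
  imports Defs
begin

lemma lin_pow: fixes T :: "'a::real_vector \<Rightarrow> 'a" shows "linear T \<Longrightarrow> linear (T ^^ k)"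
proof (induction k)
  case 0 have e: "T ^^ 0 = (\<lambda>x. x)" by (rule ext) simp
  show ?case unfolding e by (rule linear_ident)
next
  case (Suc k)
  have e: "T ^^ Suc k = T \<circ> T ^^ k" by (rule funpow.simps(2))
  show ?case unfolding e by (rule linear_compose[OF Suc.IH[OF Suc.prems] Suc.prems])
qed

theorem theorem4p1:
  fixes le :: "'a::real_vector \<Rightarrow> 'a \<Rightarrow> bool" and u :: 'a
    and A :: "('a \<Rightarrow> 'a) set"
  assumes "ordered_effect_space le u"
    and "pointed_cone le"
    and "finite A"
    and "\<And>T. T \<in> A \<Longrightarrow> linear T \<and> positive_map le T \<and> subunital le u T"
    and "\<And>S T. S \<in> A \<Longrightarrow> T \<in> A \<Longrightarrow> S \<circ> T \<in> A"
  shows "\<forall>T\<in>A. \<exists>n::nat. 1 \<le> n \<and> n \<le> card A \<and> (T ^^ n) (defect u T) = 0"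
proof
  fix T assume TA: "T \<in> A"
  have refl: "\<And>x. le x x" and tr: "\<And>x y z. le x y \<Longrightarrow> le y z \<Longrightarrow> le x z"
    and add: "\<And>x y z. le x y \<Longrightarrow> le (x + z) (y + z)"
    using assms(1) unfolding ordered_effect_space_def by blast+
  have sub: "\<And>x y. le x y \<Longrightarrow> le 0 (y - x)"
    using add by (metis diff_self diff_add_cancel add.commute diff_conv_add_uminus)
  have sum0: "\<And>a b. le 0 a \<Longrightarrow> le 0 b \<Longrightarrow> le 0 (a + b)"
    using add tr by (metis add_0)
  have point: "\<And>x. le 0 x \<Longrightarrow> le 0 (- x) \<Longrightarrow> x = 0"
  proof -
    fix x assume "le 0 x" "le 0 (- x)"
    hence "x \<in> positive_cone le \<inter> uminus ` positive_cone le"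
      unfolding positive_cone_def by (auto intro!: image_eqI[of x uminus "- x"])
    thus "x = 0" using assms(2) unfolding pointed_cone_def by blast
  qed
  have linT: "linear T" and posT: "\<And>x. le 0 x \<Longrightarrow> le 0 (T x)" and suT: "le (T u) u"
    using assms(4)[OF TA] unfolding positive_map_def positive_cone_def subunital_def by auto
  have posk: "le 0 x \<Longrightarrow> le 0 ((T ^^ k) x)" for k x
    by (induction k) (auto intro: posT)
  have linTk: "linear (T ^^ k)" for k using lin_pow[OF linT] .
  have d0: "le 0 (u - T u)" using sub[OF suT] .
  have stepk: "le 0 ((T ^^ k) u - (T ^^ Suc k) u)" for k
  proof -
    have "(T ^^ k) (u - T u) = (T ^^ k) u - (T ^^ Suc k) u"
      using linear_diff[OF linTk] by (simp add: funpow_Suc_right del: funpow.simps)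
    thus ?thesis using posk[OF d0, of k] by simp
  qed
  have mono: "le 0 ((T ^^ i) u - (T ^^ (i + m)) u)" for i m
  proof (induction m)
    case 0 then show ?case using refl by simp
  next
    case (Suc m)
    have "(T ^^ i) u - (T ^^ (i + Suc m)) u
        = ((T ^^ i) u - (T ^^ (i + m)) u) + ((T ^^ (i+m)) u - (T ^^ Suc (i + m)) u)" by simp
    then show ?case using sum0[OF Suc.IH stepk[of "i+m"]] by simp
  qed
  have inA: "k \<ge> 1 \<Longrightarrow> T ^^ k \<in> A" for k
  proof (induction k)
    case 0 then show ?case by simp
  next
    case (Suc k)
    show ?case
    proof (cases "k = 0")
      case True then show ?thesis using TA by simp
    next
      case False then have "T ^^ k \<in> A" using Suc by simp
      hence "T \<circ> T ^^ k \<in> A" using assms(5)[OF TA] by blast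
      then show ?thesis by (metis funpow.simps(2))
    qed
  qed
  have "\<not> inj_on (\<lambda>k. T ^^ k) {1..card A + 1}"
  proof
    assume "inj_on (\<lambda>k. T ^^ k) {1..card A + 1}"
    moreover have "(\<lambda>k. T ^^ k) ` {1..card A + 1} \<subseteq> A" by (rule image_subsetI, rule inA, simp)
    ultimately have "card {1..card A + 1} \<le> card A" by (rule card_inj_on_le[OF _ _ assms(3)])
    thus False by simp
  qed
  then obtain i0 j0 where h: "i0 \<in> {1..card A + 1}" "j0 \<in> {1..card A + 1}" "i0 \<noteq> j0"
    "T ^^ i0 = T ^^ j0"
    unfolding inj_on_def by blast
  define i where "i = min i0 j0"
  define j where "j = max i0 j0"
  have ij: "i \<in> {1..card A + 1}" "j \<in> {1..card A + 1}" "i < j" "T ^^ i = T ^^ j"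
    using h unfolding i_def j_def by (auto simp: min_def max_def)
  obtain m where m: "j = Suc i + m" using less_iff_Suc_add[of i j] ij(3) by auto
  define x where "x = (T ^^ i) u - (T ^^ Suc i) u"
  have "le 0 x" unfolding x_def using stepk .
  moreover have "- x = (T ^^ Suc i) u - (T ^^ j) u" unfolding x_def using ij(4) by simp
  hence "le 0 (- x)" using mono[of "Suc i" m] m by simp
  ultimately have "x = 0" using point by blast
  moreover have "(T ^^ i) (defect u T) = x"
    unfolding defect_def x_def using linear_diff[OF linTk] by (simp add: funpow_Suc_right del: funpow.simps)
  ultimately show "\<exists>n::nat. 1 \<le> n \<and> n \<le> card A \<and> (T ^^ n) (defect u T) = 0"
    using ij by (intro exI[of _ i]) auto
qed

end
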